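(* For any finite set $\mathcal{I}$ of closed intervals on the real line and any $k \in \mathbb{N}$, there exists a balanced $k$-coloring of $\mathcal{I}$.
   Context: Let $\mathcal{I}=\{I_1,\dots,I_n\}$ be a finite set of closed intervals $[\ell,r]\subset\mathbb{R}$ and $K=\{1,\dots,k\}$. A $k$-coloring is a map $\chi:\mathcal{I}\to K$. For $x\in\mathbb{R}$ and $i\in K$, let $c_i(x)$ be the number of intervals of $\mathcal{I}$ that contain $x$ and have color $i$. The imbalance at $x$ is $\mathrm{imb}(x)=\max_{i,j\in K}|c_i(x)-c_j(x)|$, and the imbalance of $\chi$ is $\mathrm{imb}(\chi)=\max_{x\in\mathbb{R}}\mathrm{imb}(x)$. A $k$-coloring is called balanced if its imbalance is at most one. *)

theory Defs
  imports Complex_Main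
begin

text \<open>A closed interval [l, r] is represented by the pair (l, r) with l \<le> r.
  A finite set of closed intervals is a finite set of such pairs.
  Colors are K = {1..k}.\<close>

definition closed_interval :: "real \<times> real \<Rightarrow> real set" where
  "closed_interval I = {fst I .. snd I}"

definition is_k_coloring :: "(real \<times> real) set \<Rightarrow> nat \<Rightarrow> (real \<times> real \<Rightarrow> nat) \<Rightarrow> bool" where
  "is_k_coloring \<I> k \<chi> \<longleftrightarrow> (\<forall>I\<in>\<I>. \<chi> I \<in> {1..k})"

definition color_count :: "(real \<times> real) set \<Rightarrow> (real \<times> real \<Rightarrow> nat) \<Rightarrow> nat \<Rightarrow> real \<Rightarrow> nat" where
  "color_count \<I> \<chi> i x = card {I\<in>\<I>. x \<in> closed_interval I \<and> \<chi> I = i}"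

definition imb_at :: "(real \<times> real) set \<Rightarrow> nat \<Rightarrow> (real \<times> real \<Rightarrow> nat) \<Rightarrow> real \<Rightarrow> int" where
  "imb_at \<I> k \<chi> x = Max {\<bar>int (color_count \<I> \<chi> i x) - int (color_count \<I> \<chi> j x)\<bar> | i j. i \<in> {1..k} \<and> j \<in> {1..k}}"

text \<open>imb(\<chi>) = max over x of imb(x); balanced means imb(\<chi>) \<le> 1, i.e. imb(x) \<le> 1 for all x.\<close>
definition balanced :: "(real \<times> real) set \<Rightarrow> nat \<Rightarrow> (real \<times> real \<Rightarrow> nat) \<Rightarrow> bool" where
  "balanced \<I> k \<chi> \<longleftrightarrow> (\<forall>x::real. imb_at \<I> k \<chi> x \<le> 1)"

end

theory Submission
  imports Defs "HOL-Library.Product_Lexorder"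
begin


definition sgnb :: "bool \<Rightarrow> int" where "sgnb b = (if b then 1 else -1)"

definition downcl :: "('e \<Rightarrow> 'k::linorder) \<Rightarrow> 'e set \<Rightarrow> 'e set \<Rightarrow> bool" where
  "downcl key E D \<longleftrightarrow> D \<subseteq> E \<and> (\<forall>e\<in>D. \<forall>e'\<in>E. key e' \<le> key e \<longrightarrow> e' \<in> D)"

lemma pair_sign:
  fixes key :: "'e \<Rightarrow> 'k::linorder"
  assumes "finite E" "\<forall>e\<in>E. M e \<in> E \<and> M e \<noteq> e \<and> M (M e) = e"
  shows "\<exists>\<tau>. (\<forall>e\<in>E. \<tau> (M e) \<noteq> \<tau> e) \<and> (\<forall>D. downcl key E D \<longrightarrow> \<bar>\<Sum>e\<in>D. sgnb (\<tau> e)\<bar> \<le> 1)"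
  using assms
proof (induction "card E" arbitrary: E M rule: less_induct)
  case less
  show ?case
  proof (cases "E = {}")
    case True
    then show ?thesis by (auto simp: downcl_def)
  next
    case False
    have "Min (key ` E) \<in> key ` E" using False less.prems(1) by simp
    then obtain e1 where e1: "e1 \<in> E" "key e1 = Min (key ` E)" by auto
    have e1min: "\<forall>e\<in>E. key e1 \<le> key e" using e1 less.prems(1) by simp
    define E1 where "E1 = E - {e1}"
    have "M e1 \<in> E1" using less.prems(2) e1 by (auto simp: E1_def)
    then have E1ne: "E1 \<noteq> {}" by auto
    have fE1: "finite E1" using less.prems(1) by (simp add: E1_def)
    have "Min (key ` E1) \<in> key ` E1" using E1ne fE1 by simp
    then obtain e2 where e2: "e2 \<in> E1" "key e2 = Min (key ` E1)" by auto
    have e2min: "\<forall>e\<in>E1. key e2 \<le> key e" using e2 fE1 by simp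
    have e12: "e2 \<in> E" "e2 \<noteq> e1" using e2 by (auto simp: E1_def)
    define E' where "E' = E - {e1, e2}"
    have fE': "finite E'" using less.prems(1) by (simp add: E'_def)
    have cE': "card E' < card E" unfolding E'_def using e1 e12 less.prems(1)
      by (intro psubset_card_mono) auto
    have sumprop: "\<bar>\<Sum>e\<in>D. sgnb (\<tau> e)\<bar> \<le> 1"
      if D: "downcl key E D" and ne: "\<tau> e1 \<noteq> \<tau> e2"
        and IH: "\<forall>D'. downcl key E' D' \<longrightarrow> \<bar>\<Sum>e\<in>D'. sgnb (\<tau> e)\<bar> \<le> 1" for D \<tau>
    proof (cases "D = {}")
      case True then show ?thesis by simp
    next
      case False
      then obtain e where e: "e \<in> D" by auto
      have DE: "D \<subseteq> E" using D by (simp add: downcl_def)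
      have "e1 \<in> D" using D e e1min e1 DE by (auto simp: downcl_def)
      show ?thesis
      proof (cases "e2 \<in> D")
        case False
        have "D = {e1}"
        proof (rule ccontr)
          assume "D \<noteq> {e1}"
          then obtain f where f: "f \<in> D" "f \<noteq> e1" using \<open>e1 \<in> D\<close> by auto
          then have "f \<in> E1" using DE by (auto simp: E1_def)
          then have "key e2 \<le> key f" using e2min by auto
          then have "e2 \<in> D" using D f e12 by (auto simp: downcl_def)
          then show False using False by simp
        qed
        then show ?thesis by (simp add: sgnb_def)
      next
        case True
        define D' where "D' = D - {e1, e2}"
        have dD': "downcl key E' D'" using D DE unfolding downcl_def D'_def E'_def by auto
        have fD: "finite D" using DE less.prems(1) finite_subset by auto
        have "(\<Sum>e\<in>D. sgnb (\<tau> e)) = sgnb (\<tau> e1) + (\<Sum>e\<in>D - {e1}. sgnb (\<tau> e))"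
          using fD \<open>e1 \<in> D\<close> by (simp add: sum.remove)
        also have "(\<Sum>e\<in>D - {e1}. sgnb (\<tau> e)) = sgnb (\<tau> e2) + (\<Sum>e\<in>D'. sgnb (\<tau> e))"
        proof -
          have "e2 \<in> D - {e1}" using True e12 by auto
          then have "(\<Sum>e\<in>D - {e1}. sgnb (\<tau> e)) = sgnb (\<tau> e2) + (\<Sum>e\<in>D - {e1} - {e2}. sgnb (\<tau> e))"
            using fD by (simp add: sum.remove)
          moreover have "D - {e1} - {e2} = D'" unfolding D'_def by auto
          ultimately show ?thesis by simp
        qed
        finally have "(\<Sum>e\<in>D. sgnb (\<tau> e)) = (\<Sum>e\<in>D'. sgnb (\<tau> e))"
          using ne by (auto simp: sgnb_def)
        then show ?thesis using IH dD' by simp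
      qed
    qed
    show ?thesis
    proof (cases "M e1 = e2")
      case True
      have ME': "\<forall>e\<in>E'. M e \<in> E' \<and> M e \<noteq> e \<and> M (M e) = e"
      proof
        fix e assume e: "e \<in> E'"
        have m: "M e \<in> E" "M e \<noteq> e" "M (M e) = e" using less.prems(2) e by (auto simp: E'_def)
        have "M e2 = e1" using less.prems(2) True e1 by auto
        then have "M e \<noteq> e1" "M e \<noteq> e2" using m e True by (auto simp: E'_def)
        then show "M e \<in> E' \<and> M e \<noteq> e \<and> M (M e) = e" using m by (auto simp: E'_def)
      qed
      obtain \<tau>' where t': "\<forall>e\<in>E'. \<tau>' (M e) \<noteq> \<tau>' e"
        "\<forall>D. downcl key E' D \<longrightarrow> \<bar>\<Sum>e\<in>D. sgnb (\<tau>' e)\<bar> \<le> 1"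
        using less.hyps[OF cE' fE' ME'] by blast
      define \<tau> where "\<tau> = \<tau>'(e1 := True, e2 := False)"
      have A: "\<forall>e\<in>E. \<tau> (M e) \<noteq> \<tau> e"
      proof
        fix e assume "e \<in> E"
        show "\<tau> (M e) \<noteq> \<tau> e"
        proof (cases "e \<in> E'")
          case True
          then show ?thesis using t'(1) ME' unfolding \<tau>_def E'_def by auto
        next
          case False
          then have "e = e1 \<or> e = e2" using \<open>e \<in> E\<close> by (auto simp: E'_def)
          then show ?thesis using \<open>M e1 = e2\<close> less.prems(2) e1 e12 unfolding \<tau>_def by auto
        qed
      qed
      have B: "\<forall>D'. downcl key E' D' \<longrightarrow> \<bar>\<Sum>e\<in>D'. sgnb (\<tau> e)\<bar> \<le> 1"
      proof (intro allI impI)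
        fix D' assume d: "downcl key E' D'"
        then have "D' \<subseteq> E'" by (simp add: downcl_def)
        then have "(\<Sum>e\<in>D'. sgnb (\<tau> e)) = (\<Sum>e\<in>D'. sgnb (\<tau>' e))"
          by (intro sum.cong) (auto simp: \<tau>_def E'_def)
        then show "\<bar>\<Sum>e\<in>D'. sgnb (\<tau> e)\<bar> \<le> 1" using t'(2) d by simp
      qed
      have "\<tau> e1 \<noteq> \<tau> e2" using e12 by (simp add: \<tau>_def)
      then show ?thesis using A sumprop[OF _ _ B] by blast
    next
      case False
      define a where "a = M e1"
      define b where "b = M e2"
      have ab: "a \<in> E'" "b \<in> E'" "a \<noteq> b" "M a = e1" "M b = e2"
      proof -
        have p1: "M e1 \<in> E" "M e1 \<noteq> e1" "M (M e1) = e1" using less.prems(2) e1 by auto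
        have p2: "M e2 \<in> E" "M e2 \<noteq> e2" "M (M e2) = e2" using less.prems(2) e12 by auto
        have "M e2 \<noteq> e1" using p2 False by auto
        moreover have "M e1 \<noteq> M e2" using p1 p2 e12 by metis
        ultimately show "a \<in> E'" "b \<in> E'" "a \<noteq> b" "M a = e1" "M b = e2"
          using p1 p2 False unfolding a_def b_def E'_def by auto
      qed
      define M' where "M' = (\<lambda>e. if e = a then b else if e = b then a else M e)"
      have ME': "\<forall>e\<in>E'. M' e \<in> E' \<and> M' e \<noteq> e \<and> M' (M' e) = e"
      proof
        fix e assume e: "e \<in> E'"
        show "M' e \<in> E' \<and> M' e \<noteq> e \<and> M' (M' e) = e"
        proof (cases "e = a \<or> e = b")
          case True then show ?thesis using ab unfolding M'_def by auto
        next
          case nab: False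
          have "M e \<in> E" "M e \<noteq> e" "M (M e) = e" using less.prems(2) e by (auto simp: E'_def)
          moreover have "M e \<noteq> e1"
          proof
            assume h: "M e = e1"
            have "M e1 = e" using \<open>M (M e) = e\<close> h by simp
            then show False using nab a_def by simp
          qed
          moreover have "M e \<noteq> e2"
          proof
            assume h: "M e = e2"
            have "M e2 = e" using \<open>M (M e) = e\<close> h by simp
            then show False using nab b_def by simp
          qed
          moreover have "M e \<noteq> a" using ab(4) \<open>M (M e) = e\<close> e by (auto simp: E'_def)
          moreover have "M e \<noteq> b" using ab(5) \<open>M (M e) = e\<close> e by (auto simp: E'_def)
          ultimately show ?thesis using nab unfolding M'_def E'_def by auto
        qed
      qed
      obtain \<tau>' where t': "\<forall>e\<in>E'. \<tau>' (M' e) \<noteq> \<tau>' e"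
        "\<forall>D. downcl key E' D \<longrightarrow> \<bar>\<Sum>e\<in>D. sgnb (\<tau>' e)\<bar> \<le> 1"
        using less.hyps[OF cE' fE' ME'] by blast
      define \<tau> where "\<tau> = \<tau>'(e1 := \<not> \<tau>' a, e2 := \<not> \<tau>' b)"
      have "\<tau>' (M' a) \<noteq> \<tau>' a" using t'(1) ab(1) by blast
      then have tab: "\<tau>' b \<noteq> \<tau>' a" by (simp add: M'_def)
      have ane: "a \<noteq> e1" "a \<noteq> e2" "b \<noteq> e1" "b \<noteq> e2" using ab(1,2) by (auto simp: E'_def)
      have te1: "\<tau> e1 = (\<not> \<tau>' a)" "\<tau> e2 = (\<not> \<tau>' b)" using e12(2) by (simp_all add: \<tau>_def)
      have tE': "\<tau> e = \<tau>' e" if "e \<in> E'" for e using that by (auto simp: \<tau>_def E'_def)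
      have Me12: "M e1 = a" "M e2 = b" by (simp_all add: a_def b_def)
      have A: "\<forall>e\<in>E. \<tau> (M e) \<noteq> \<tau> e"
      proof
        fix e assume "e \<in> E"
        show "\<tau> (M e) \<noteq> \<tau> e"
        proof (cases "e \<in> E'")
          case True
          show ?thesis
          proof (cases "e = a \<or> e = b")
            case True
            then show ?thesis
            proof
              assume "e = a" then show ?thesis using ab(4) te1 tE'[OF ab(1)] by simp
            next
              assume "e = b" then show ?thesis using ab(5) te1 tE'[OF ab(2)] by simp
            qed
          next
            case nab: False
            have "M (M e) = e" using less.prems(2) \<open>e\<in>E\<close> by auto
            have "M e \<noteq> e1"
            proof
              assume h: "M e = e1"
              have "M e1 = e" using \<open>M (M e) = e\<close> h by simp
              then show False using nab Me12 by simp
            qed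
            moreover have "M e \<noteq> e2"
            proof
              assume h: "M e = e2"
              have "M e2 = e" using \<open>M (M e) = e\<close> h by simp
              then show False using nab Me12 by simp
            qed
            ultimately have "M e \<in> E'" using less.prems(2) \<open>e\<in>E\<close> by (simp add: E'_def)
            moreover have "M' e = M e" using nab by (simp add: M'_def)
            moreover have "\<tau>' (M' e) \<noteq> \<tau>' e" using t'(1) \<open>e \<in> E'\<close> by blast
            ultimately show ?thesis using tE' \<open>e \<in> E'\<close> by simp
          qed
        next
          case False
          then have "e = e1 \<or> e = e2" using \<open>e \<in> E\<close> by (auto simp: E'_def)
          then show ?thesis
          proof
            assume "e = e1" then show ?thesis using Me12 te1 tE'[OF ab(1)] by simp
          next
            assume "e = e2" then show ?thesis using Me12 te1 tE'[OF ab(2)] by simp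
          qed
        qed
      qed
      have B: "\<forall>D'. downcl key E' D' \<longrightarrow> \<bar>\<Sum>e\<in>D'. sgnb (\<tau> e)\<bar> \<le> 1"
      proof (intro allI impI)
        fix D' assume d: "downcl key E' D'"
        then have "D' \<subseteq> E'" by (simp add: downcl_def)
        then have "(\<Sum>e\<in>D'. sgnb (\<tau> e)) = (\<Sum>e\<in>D'. sgnb (\<tau>' e))"
          by (intro sum.cong) (auto simp: \<tau>_def E'_def)
        then show "\<bar>\<Sum>e\<in>D'. sgnb (\<tau> e)\<bar> \<le> 1" using t'(2) d by simp
      qed
      have "\<tau> e1 \<noteq> \<tau> e2" using te1 tab by auto
      then show ?thesis using A sumprop[OF _ _ B] by blast
    qed
  qed
qed



lemma sgn_sum:
  assumes "finite C"
  shows "(\<Sum>I\<in>C. sgnb (\<sigma> I)) = int (card {I\<in>C. \<sigma> I}) - int (card {I\<in>C. \<not> \<sigma> I})"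
proof -
  have "(\<Sum>I\<in>C. sgnb (\<sigma> I)) = (\<Sum>I\<in>C. if \<sigma> I then 1 else -1)" by (simp add: sgnb_def)
  also have "\<dots> = (\<Sum>I\<in>C \<inter> {I. \<sigma> I}. 1) + (\<Sum>I\<in>C \<inter> - {I. \<sigma> I}. -1)"
    by (rule sum.If_cases) (rule assms)
  also have "C \<inter> {I. \<sigma> I} = {I\<in>C. \<sigma> I}" by auto
  also have "C \<inter> - {I. \<sigma> I} = {I\<in>C. \<not> \<sigma> I}" by auto
  finally show ?thesis by simp
qed

lemma two_col:
  fixes J :: "(real \<times> real) set"
  assumes fin: "finite J" and wf: "\<forall>I\<in>J. fst I \<le> snd I"
  shows "\<exists>\<sigma>. \<forall>x. \<bar>int (card {I\<in>J. x \<in> closed_interval I \<and> \<sigma> I}) - int (card {I\<in>J. x \<in> closed_interval I \<and> \<not> \<sigma> I})\<bar> \<le> 1"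
proof -
  define E where "E = J \<times> (UNIV::bool set)"
  define M where "M = (\<lambda>(I::real\<times>real, b::bool). (I, \<not>b))"
  define key where "key = (\<lambda>(I::real\<times>real, b::bool). if b then (fst I, 0::nat) else (snd I, 1::nat))"
  have fE: "finite E" using fin by (simp add: E_def)
  have ME: "\<forall>e\<in>E. M e \<in> E \<and> M e \<noteq> e \<and> M (M e) = e" by (auto simp: E_def M_def)
  obtain \<tau> where t: "\<forall>e\<in>E. \<tau> (M e) \<noteq> \<tau> e" "\<forall>D. downcl key E D \<longrightarrow> \<bar>\<Sum>e\<in>D. sgnb (\<tau> e)\<bar> \<le> 1"
    using pair_sign[OF fE ME, of key] by blast
  define \<sigma> where "\<sigma> I = \<tau> (I, True)" for I
  have tf: "\<tau> (I,False) = (\<not> \<sigma> I)" if "I \<in> J" for I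
  proof -
    have "\<tau> (M (I,True)) \<noteq> \<tau> (I,True)" using t(1) that by (auto simp: E_def)
    then show ?thesis by (auto simp: M_def \<sigma>_def)
  qed
  show ?thesis
  proof (intro exI allI)
    fix x
    define A where "A = {I\<in>J. fst I \<le> x}"
    define B where "B = {I\<in>J. snd I < x}"
    define D where "D = (\<lambda>I. (I,True)) ` A \<union> (\<lambda>I. (I,False)) ` B"
    have dc: "downcl key E D"
      unfolding downcl_def D_def A_def B_def E_def key_def by auto
    have fA: "finite A" "finite B" using fin by (auto simp: A_def B_def)
    have "(\<Sum>e\<in>D. sgnb (\<tau> e)) = (\<Sum>e\<in>(\<lambda>I. (I,True)) ` A. sgnb (\<tau> e)) + (\<Sum>e\<in>(\<lambda>I. (I,False)) ` B. sgnb (\<tau> e))"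
      unfolding D_def using fA by (intro sum.union_disjoint) auto
    also have "(\<Sum>e\<in>(\<lambda>I. (I,True)) ` A. sgnb (\<tau> e)) = (\<Sum>I\<in>A. sgnb (\<sigma> I))"
      by (subst sum.reindex) (auto simp: inj_on_def \<sigma>_def)
    also have "(\<Sum>e\<in>(\<lambda>I. (I,False)) ` B. sgnb (\<tau> e)) = (\<Sum>I\<in>B. - sgnb (\<sigma> I))"
      by (subst sum.reindex) (auto simp: inj_on_def tf B_def sgnb_def intro!: sum.cong)
    also have "(\<Sum>I\<in>B. - sgnb (\<sigma> I)) = - (\<Sum>I\<in>B. sgnb (\<sigma> I))" by (simp add: sum_negf)
    finally have sD: "(\<Sum>e\<in>D. sgnb (\<tau> e)) = (\<Sum>I\<in>A. sgnb (\<sigma> I)) - (\<Sum>I\<in>B. sgnb (\<sigma> I))" by simp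
    have BA: "B \<subseteq> A" using wf by (auto simp: A_def B_def)
    have "(\<Sum>I\<in>A. sgnb (\<sigma> I)) - (\<Sum>I\<in>B. sgnb (\<sigma> I)) = (\<Sum>I\<in>A - B. sgnb (\<sigma> I))"
      using sum.subset_diff[OF BA fA(1), of "\<lambda>I. sgnb (\<sigma> I)"] by simp
    moreover have "A - B = {I\<in>J. x \<in> closed_interval I}"
      by (auto simp: A_def B_def closed_interval_def)
    ultimately have "(\<Sum>e\<in>D. sgnb (\<tau> e)) = (\<Sum>I\<in>{I\<in>J. x \<in> closed_interval I}. sgnb (\<sigma> I))"
      using sD by simp
    also have "\<dots> = int (card {I\<in>{I\<in>J. x \<in> closed_interval I}. \<sigma> I}) - int (card {I\<in>{I\<in>J. x \<in> closed_interval I}. \<not> \<sigma> I})"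
      using fin by (intro sgn_sum) simp
    also have "{I\<in>{I\<in>J. x \<in> closed_interval I}. \<sigma> I} = {I\<in>J. x \<in> closed_interval I \<and> \<sigma> I}" by auto
    also have "{I\<in>{I\<in>J. x \<in> closed_interval I}. \<not> \<sigma> I} = {I\<in>J. x \<in> closed_interval I \<and> \<not> \<sigma> I}" by auto
    finally have eq: "(\<Sum>e\<in>D. sgnb (\<tau> e)) = int (card {I\<in>J. x \<in> closed_interval I \<and> \<sigma> I}) - int (card {I\<in>J. x \<in> closed_interval I \<and> \<not> \<sigma> I})" .
    have "\<bar>\<Sum>e\<in>D. sgnb (\<tau> e)\<bar> \<le> 1" using t(2) dc by blast
    then show "\<bar>int (card {I\<in>J. x \<in> closed_interval I \<and> \<sigma> I}) - int (card {I\<in>J. x \<in> closed_interval I \<and> \<not> \<sigma> I})\<bar> \<le> 1"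
      unfolding eq .
  qed
qed



lemma sq_aux:
  fixes a b p q :: int
  assumes s: "p + q = a + b" and pq: "\<bar>p - q\<bar> \<le> 1"
  shows "p^2 + q^2 \<le> a^2 + b^2" "\<bar>a - b\<bar> \<ge> 2 \<Longrightarrow> p^2 + q^2 < a^2 + b^2"
proof -
  have e1: "2*(a^2+b^2) = (a+b)^2 + (a-b)^2" by (simp add: power2_eq_square algebra_simps)
  have e2: "2*(p^2+q^2) = (p+q)^2 + (p-q)^2" by (simp add: power2_eq_square algebra_simps)
  have pq2: "(p-q)^2 \<le> 1"
  proof -
    have "(p-q)^2 = \<bar>p-q\<bar> * \<bar>p-q\<bar>" by (simp add: power2_eq_square abs_mult_self_eq)
    also have "\<dots> \<le> 1" using pq by (intro mult_le_one) auto
    finally show ?thesis .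
  qed
  have ab2: "(p-q)^2 \<le> (a-b)^2"
  proof (cases "a = b")
    case True
    then have "p + q = 2*a" using s by simp
    then have "p = q" using pq by presburger
    then show ?thesis by simp
  next
    case False
    then have "1 \<le> \<bar>a-b\<bar>" by simp
    then have "1 * 1 \<le> \<bar>a-b\<bar> * \<bar>a-b\<bar>" by (intro mult_mono) auto
    also have "\<bar>a-b\<bar> * \<bar>a-b\<bar> = (a-b)^2" by (simp add: power2_eq_square abs_mult_self_eq)
    finally show ?thesis using pq2 by simp
  qed
  show "p^2 + q^2 \<le> a^2 + b^2" using e1 e2 s ab2 by simp
  assume "\<bar>a - b\<bar> \<ge> 2"
  then have "2 * 2 \<le> \<bar>a-b\<bar> * \<bar>a-b\<bar>" by (intro mult_mono) auto
  also have "\<bar>a-b\<bar> * \<bar>a-b\<bar> = (a-b)^2" by (simp add: power2_eq_square abs_mult_self_eq)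
  finally have "(p-q)^2 < (a-b)^2" using pq2 by simp
  then show "p^2 + q^2 < a^2 + b^2" using e1 e2 s by simp
qed

lemma sum_cd:
  fixes h :: "nat \<Rightarrow> nat"
  assumes "finite K" "c \<in> K" "d \<in> K" "c \<noteq> d"
  shows "(\<Sum>i\<in>K. h i) = h c + h d + (\<Sum>i\<in>K - {c,d}. h i)"
proof -
  have "(\<Sum>i\<in>K. h i) = h c + (\<Sum>i\<in>K - {c}. h i)" using assms by (simp add: sum.remove)
  also have "(\<Sum>i\<in>K - {c}. h i) = h d + (\<Sum>i\<in>K - {c} - {d}. h i)" using assms by (simp add: sum.remove)
  also have "K - {c} - {d} = K - {c,d}" by auto
  finally show ?thesis by simp
qed

lemma edge_ineq:
  fixes f g :: "nat \<Rightarrow> nat"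
  assumes K: "finite K" "c \<in> K" "d \<in> K" "c \<noteq> d"
    and same: "\<forall>i\<in>K - {c,d}. g i = f i" and s: "g c + g d = f c + f d"
    and b: "\<bar>int (g c) - int (g d)\<bar> \<le> 1"
  shows "(\<Sum>i\<in>K. (g i)^2) \<le> (\<Sum>i\<in>K. (f i)^2)"
    "\<bar>int (f c) - int (f d)\<bar> \<ge> 2 \<Longrightarrow> (\<Sum>i\<in>K. (g i)^2) < (\<Sum>i\<in>K. (f i)^2)"
proof -
  have R: "(\<Sum>i\<in>K - {c,d}. (g i)^2) = (\<Sum>i\<in>K - {c,d}. (f i)^2)" using same by simp
  have s': "int (g c) + int (g d) = int (f c) + int (f d)" using s by linarith
  have "int ((g c)^2 + (g d)^2) \<le> int ((f c)^2 + (f d)^2)"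
    using sq_aux(1)[OF s' b] by simp
  then have "(g c)^2 + (g d)^2 \<le> (f c)^2 + (f d)^2" by linarith
  then show "(\<Sum>i\<in>K. (g i)^2) \<le> (\<Sum>i\<in>K. (f i)^2)"
    using sum_cd[OF K, of "\<lambda>i. (g i)^2"] sum_cd[OF K, of "\<lambda>i. (f i)^2"] R by simp
  assume "\<bar>int (f c) - int (f d)\<bar> \<ge> 2"
  then have "int ((g c)^2 + (g d)^2) < int ((f c)^2 + (f d)^2)"
    using sq_aux(2)[OF s' b] by simp
  then have "(g c)^2 + (g d)^2 < (f c)^2 + (f d)^2" by linarith
  then show "(\<Sum>i\<in>K. (g i)^2) < (\<Sum>i\<in>K. (f i)^2)"
    using sum_cd[OF K, of "\<lambda>i. (g i)^2"] sum_cd[OF K, of "\<lambda>i. (f i)^2"] R by simp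
qed

definition Sx :: "(real \<times> real) set \<Rightarrow> real \<Rightarrow> (real \<times> real) set" where
  "Sx \<I> x = {I\<in>\<I>. x \<in> closed_interval I}"

definition cnt :: "(real \<times> real \<Rightarrow> nat) \<Rightarrow> (real \<times> real) set \<Rightarrow> nat \<Rightarrow> nat" where
  "cnt \<chi> E i = card {I\<in>E. \<chi> I = i}"

definition Phi :: "(real \<times> real) set \<Rightarrow> nat \<Rightarrow> (real \<times> real \<Rightarrow> nat) \<Rightarrow> nat" where
  "Phi \<I> k \<chi> = (\<Sum>E\<in>range (Sx \<I>). \<Sum>i\<in>{1..k}. (cnt \<chi> E i)^2)"

lemma cc_cnt: "color_count \<I> \<chi> i x = cnt \<chi> (Sx \<I> x) i"
  unfolding color_count_def cnt_def Sx_def by (rule arg_cong[where f=card]) auto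

lemma dewerra:
  assumes fin: "finite \<I>" and wf: "\<forall>I\<in>\<I>. fst I \<le> snd I"
  shows "\<forall>\<chi>. is_k_coloring \<I> k \<chi> \<longrightarrow> Phi \<I> k \<chi> = m \<longrightarrow>
    (\<exists>\<chi>'. is_k_coloring \<I> k \<chi>' \<and> (\<forall>x. \<forall>i\<in>{1..k}. \<forall>j\<in>{1..k}. color_count \<I> \<chi>' i x \<le> color_count \<I> \<chi>' j x + 1))"
proof (induction m rule: less_induct)
  case (less m)
  show ?case
  proof (intro allI impI)
    fix \<chi> assume col: "is_k_coloring \<I> k \<chi>" and phim: "Phi \<I> k \<chi> = m"
    show "\<exists>\<chi>'. is_k_coloring \<I> k \<chi>' \<and> (\<forall>x. \<forall>i\<in>{1..k}. \<forall>j\<in>{1..k}. color_count \<I> \<chi>' i x \<le> color_count \<I> \<chi>' j x + 1)"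
    proof (cases "\<forall>x. \<forall>i\<in>{1..k}. \<forall>j\<in>{1..k}. color_count \<I> \<chi> i x \<le> color_count \<I> \<chi> j x + 1")
      case True then show ?thesis using col by blast
    next
      case False
      then obtain x c d where cd: "c \<in> {1..k}" "d \<in> {1..k}"
        and bad: "\<not> color_count \<I> \<chi> c x \<le> color_count \<I> \<chi> d x + 1" by blast
      have cnd: "c \<noteq> d" using bad by auto
      define J where "J = {I\<in>\<I>. \<chi> I = c \<or> \<chi> I = d}"
      have finJ: "finite J" using fin by (simp add: J_def)
      have wfJ: "\<forall>I\<in>J. fst I \<le> snd I" using wf by (simp add: J_def)
      obtain \<sigma> where sig: "\<forall>x. \<bar>int (card {I\<in>J. x \<in> closed_interval I \<and> \<sigma> I}) - int (card {I\<in>J. x \<in> closed_interval I \<and> \<not> \<sigma> I})\<bar> \<le> 1"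
        using two_col[OF finJ wfJ] by blast
      define \<chi>' where "\<chi>' I = (if I \<in> J then (if \<sigma> I then c else d) else \<chi> I)" for I
      have col': "is_k_coloring \<I> k \<chi>'" using col cd unfolding is_k_coloring_def \<chi>'_def by auto
      have edge: "(\<Sum>i\<in>{1..k}. (cnt \<chi>' (Sx \<I> y) i)^2) \<le> (\<Sum>i\<in>{1..k}. (cnt \<chi> (Sx \<I> y) i)^2)
         \<and> (\<bar>int (cnt \<chi> (Sx \<I> y) c) - int (cnt \<chi> (Sx \<I> y) d)\<bar> \<ge> 2 \<longrightarrow>
             (\<Sum>i\<in>{1..k}. (cnt \<chi>' (Sx \<I> y) i)^2) < (\<Sum>i\<in>{1..k}. (cnt \<chi> (Sx \<I> y) i)^2))" for y
      proof -
        define E where "E = Sx \<I> y"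
        have EI: "E \<subseteq> \<I>" by (auto simp: E_def Sx_def)
        have finE: "finite E" using EI fin finite_subset by auto
        have same: "\<forall>i\<in>{1..k} - {c,d}. cnt \<chi>' E i = cnt \<chi> E i"
        proof
          fix i assume "i \<in> {1..k} - {c,d}"
          then have "i \<noteq> c" "i \<noteq> d" by auto
          then have "{I\<in>E. \<chi>' I = i} = {I\<in>E. \<chi> I = i}" using EI
            unfolding \<chi>'_def J_def by auto
          then show "cnt \<chi>' E i = cnt \<chi> E i" by (simp add: cnt_def)
        qed
        have gc: "cnt \<chi>' E c = card {I\<in>J. y \<in> closed_interval I \<and> \<sigma> I}"
          unfolding cnt_def
          by (rule arg_cong[where f=card]) (use cnd in \<open>auto simp: \<chi>'_def J_def E_def Sx_def\<close>)
        have gd: "cnt \<chi>' E d = card {I\<in>J. y \<in> closed_interval I \<and> \<not> \<sigma> I}"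
          unfolding cnt_def
          by (rule arg_cong[where f=card]) (use cnd in \<open>auto simp: \<chi>'_def J_def E_def Sx_def\<close>)
        have JE: "{I\<in>J. y \<in> closed_interval I} = {I\<in>E. \<chi> I = c} \<union> {I\<in>E. \<chi> I = d}"
          by (auto simp: J_def E_def Sx_def)
        have "card {I\<in>J. y \<in> closed_interval I} = cnt \<chi> E c + cnt \<chi> E d"
          unfolding JE cnt_def using finE cnd by (intro card_Un_disjoint) auto
        moreover have "{I\<in>J. y \<in> closed_interval I} = {I\<in>J. y \<in> closed_interval I \<and> \<sigma> I} \<union> {I\<in>J. y \<in> closed_interval I \<and> \<not> \<sigma> I}"
          by auto
        moreover have "card ({I\<in>J. y \<in> closed_interval I \<and> \<sigma> I} \<union> {I\<in>J. y \<in> closed_interval I \<and> \<not> \<sigma> I})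
            = card {I\<in>J. y \<in> closed_interval I \<and> \<sigma> I} + card {I\<in>J. y \<in> closed_interval I \<and> \<not> \<sigma> I}"
          using finJ by (intro card_Un_disjoint) auto
        ultimately have s: "cnt \<chi>' E c + cnt \<chi>' E d = cnt \<chi> E c + cnt \<chi> E d" using gc gd by simp
        have b: "\<bar>int (cnt \<chi>' E c) - int (cnt \<chi>' E d)\<bar> \<le> 1" using sig gc gd by simp
        show ?thesis
          using edge_ineq[OF _ cd cnd same s b] unfolding E_def by simp
      qed
      have finR: "finite (range (Sx \<I>))"
        by (rule finite_subset[of _ "Pow \<I>"]) (auto simp: Sx_def fin)
      have "Phi \<I> k \<chi>' < Phi \<I> k \<chi>"
        unfolding Phi_def
      proof (rule sum_strict_mono_ex1[OF finR])
        show "\<forall>E\<in>range (Sx \<I>). (\<Sum>i\<in>{1..k}. (cnt \<chi>' E i)^2) \<le> (\<Sum>i\<in>{1..k}. (cnt \<chi> E i)^2)"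
          using edge by blast
        have "\<bar>int (cnt \<chi> (Sx \<I> x) c) - int (cnt \<chi> (Sx \<I> x) d)\<bar> \<ge> 2"
          using bad unfolding cc_cnt by linarith
        then show "\<exists>E\<in>range (Sx \<I>). (\<Sum>i\<in>{1..k}. (cnt \<chi>' E i)^2) < (\<Sum>i\<in>{1..k}. (cnt \<chi> E i)^2)"
          using edge[of x] by blast
      qed
      then show ?thesis using less.IH[of "Phi \<I> k \<chi>'"] phim col' by blast
    qed
  qed
qed

theorem theorem1:
  fixes \<I> :: "(real \<times> real) set" and k :: nat
  assumes "finite \<I>"
    and "\<forall>I\<in>\<I>. fst I \<le> snd I"
    and "k \<ge> 1"
  shows "\<exists>\<chi>. is_k_coloring \<I> k \<chi> \<and> balanced \<I> k \<chi>"
proof -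
  have c0: "is_k_coloring \<I> k (\<lambda>_. 1)" using assms(3) by (simp add: is_k_coloring_def)
  obtain \<chi> where col: "is_k_coloring \<I> k \<chi>"
    and good: "\<forall>x. \<forall>i\<in>{1..k}. \<forall>j\<in>{1..k}. color_count \<I> \<chi> i x \<le> color_count \<I> \<chi> j x + 1"
    using dewerra[OF assms(1,2)] c0 by blast
  have "balanced \<I> k \<chi>"
    unfolding balanced_def imb_at_def
  proof
    fix x
    let ?f = "\<lambda>(i,j). \<bar>int (color_count \<I> \<chi> i x) - int (color_count \<I> \<chi> j x)\<bar>"
    have S: "{\<bar>int (color_count \<I> \<chi> i x) - int (color_count \<I> \<chi> j x)\<bar> | i j. i \<in> {1..k} \<and> j \<in> {1..k}}
        = ?f ` ({1..k} \<times> {1..k})" by (auto; blast)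
    have ne: "({1..k} \<times> {1..k}) \<noteq> {}" using assms(3) by auto
    have "\<forall>p\<in>{1..k} \<times> {1..k}. ?f p \<le> 1"
    proof
      fix p assume "p \<in> {1..k} \<times> {1..k}"
      then obtain i j where p: "p = (i,j)" "i \<in> {1..k}" "j \<in> {1..k}" by auto
      have "color_count \<I> \<chi> i x \<le> color_count \<I> \<chi> j x + 1" "color_count \<I> \<chi> j x \<le> color_count \<I> \<chi> i x + 1"
        using good p by blast+
      then show "?f p \<le> 1" using p by auto
    qed
    then show "Max {\<bar>int (color_count \<I> \<chi> i x) - int (color_count \<I> \<chi> j x)\<bar> | i j. i \<in> {1..k} \<and> j \<in> {1..k}} \<le> 1"
      unfolding S using ne by (subst Max_le_iff) auto
  qed
  then show ?thesis using col by blast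
qed

end
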